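(* Let $M$ be a real representable (loopless) matroid. Then $M$ is strictly uniformly dense if and only if $M$ has a projection representation (a real symmetric matrix $T$ with $T^2=T$ whose nonsingular $\operatorname{rank}(M)\times\operatorname{rank}(M)$ principal submatrices $T_{BB}$ are exactly those indexed by bases $B$) whose diagonal entries are all equal to $\rho(M)^{-1}$.
   Context: A matroid $M$ on ground set $E$ ($|E|=n$) of rank $k$ is real representable if some real full-rank $k\times n$ matrix $X$ satisfies: a $k$-subset $B$ is a basis iff $\det(X_B)\neq 0$. Loopless: every element is in some basis. Density $\rho(M)=|E|/\operatorname{rank}(E)$. The base polytope $P(M)$ is the convex hull of indicator vectors of bases. $M$ is strictly uniformly dense if the point $(\rho(M)^{-1},\dots,\rho(M)^{-1})$ lies in the relative interior of $P(M)$; equivalently, there is a measure $\mu$ on the bases with $\mu(B)>0$ for every basis $B$ such that $\mu(\{B: B\ni e\})$ is the same for all $e\in E$. *)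

theory Defs
  imports "HOL-Analysis.Analysis"
begin

text \<open>The ground set is UNIV of a finite linearly ordered type; the linear order
  is only used to list the elements of a subset when forming submatrices.\<close>

definition det_k :: "nat \<Rightarrow> (nat \<Rightarrow> nat \<Rightarrow> real) \<Rightarrow> real" where
  "det_k k A = (\<Sum>p | p permutes {..<k}. of_int (sign p) * (\<Prod>i<k. A i (p i)))"

definition col_submat :: "(nat \<Rightarrow> 'e::linorder \<Rightarrow> real) \<Rightarrow> 'e set \<Rightarrow> nat \<Rightarrow> nat \<Rightarrow> real" where
  "col_submat X B = (\<lambda>i j. X i (sorted_list_of_set B ! j))"

definition principal_submat :: "('e::linorder \<Rightarrow> 'e \<Rightarrow> real) \<Rightarrow> 'e set \<Rightarrow> nat \<Rightarrow> nat \<Rightarrow> real" where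
  "principal_submat T B = (\<lambda>i j. T (sorted_list_of_set B ! i) (sorted_list_of_set B ! j))"

definition full_row_rank :: "nat \<Rightarrow> (nat \<Rightarrow> 'e::finite \<Rightarrow> real) \<Rightarrow> bool" where
  "full_row_rank k X \<longleftrightarrow>
     (\<forall>c::nat \<Rightarrow> real. (\<forall>e. (\<Sum>i<k. c i * X i e) = 0) \<longrightarrow> (\<forall>i<k. c i = 0))"

definition real_representable :: "('e::{finite,linorder}) set set \<Rightarrow> bool" where
  "real_representable bases \<longleftrightarrow>
     (\<exists>k X. full_row_rank k X \<and>
        (\<forall>B. B \<in> bases \<longleftrightarrow> card B = k \<and> det_k k (col_submat X B) \<noteq> 0))"

definition loopless :: "'e set set \<Rightarrow> bool" where
  "loopless bases \<longleftrightarrow> (\<forall>e. \<exists>B\<in>bases. e \<in> B)"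

definition matroid_rank :: "('e::finite) set set \<Rightarrow> nat" where
  "matroid_rank bases = Max (card ` bases)"

definition density :: "('e::finite) set set \<Rightarrow> real" where
  "density bases = real CARD('e) / real (matroid_rank bases)"

definition indicator_vec :: "('e::finite) set \<Rightarrow> real ^ 'e" where
  "indicator_vec B = (\<chi> e. if e \<in> B then 1 else 0)"

definition base_polytope :: "('e::finite) set set \<Rightarrow> (real ^ 'e) set" where
  "base_polytope bases = convex hull (indicator_vec ` bases)"

definition strictly_uniformly_dense :: "('e::finite) set set \<Rightarrow> bool" where
  "strictly_uniformly_dense bases \<longleftrightarrow>
     (\<chi> e. inverse (density bases)) \<in> rel_interior (base_polytope bases)"

definition projection_representation ::
  "('e::{finite,linorder}) set set \<Rightarrow> ('e \<Rightarrow> 'e \<Rightarrow> real) \<Rightarrow> bool" where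
  "projection_representation bases T \<longleftrightarrow>
     (\<forall>e f. T e f = T f e) \<and>
     (\<forall>e f. (\<Sum>g\<in>UNIV. T e g * T g f) = T e f) \<and>
     (\<forall>B. card B = matroid_rank bases \<longrightarrow>
        (det_k (matroid_rank bases) (principal_submat T B) \<noteq> 0 \<longleftrightarrow> B \<in> bases))"

end

theory Submission
  imports Defs "Jordan_Normal_Form.Determinant"
begin

definition jm :: "nat \<Rightarrow> (nat \<Rightarrow> nat \<Rightarrow> real) \<Rightarrow> real mat" where
  "jm k A = Matrix.mat k k (\<lambda>(i,j). A i j)"

lemma jm_carrier[simp]: "jm k A \<in> carrier_mat k k" by (simp add: jm_def)

lemma dk_conv: "det_k k A = Determinant.det (jm k A)"
  unfolding det_k_def Determinant.det_def jm_def by (simp add: atLeast0LessThan)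

lemma dk_rows_eq:
  assumes "i1 < k" "i2 < k" "i1 \<noteq> i2" "\<And>j. A i1 j = A i2 j"
  shows "det_k k A = 0"
proof -
  have "row (jm k A) i1 = row (jm k A) i2"
  proof (rule eq_vecI)
    fix j assume "j < dim_vec (row (jm k A) i2)"
    then have "j < k" by (simp add: jm_def)
    then show "row (jm k A) i1 $ j = row (jm k A) i2 $ j"
      using assms by (simp add: jm_def row_def)
  qed (simp add: jm_def)
  then show ?thesis unfolding dk_conv
    by (rule det_identical_rows[OF jm_carrier assms(3) assms(1,2)])
qed
lemma dk_perm_rows:
  assumes "p permutes {..<k}"
  shows "det_k k (\<lambda>i j. A (p i) j) = of_int (sign p) * det_k k A"
proof -
  have p: "p permutes {0..<k}" using assms by (simp add: atLeast0LessThan)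
  have pk: "i < k \<Longrightarrow> p i < k" for i using permutes_in_image[OF assms, of i] by simp
  have "jm k (\<lambda>i j. A (p i) j) = Matrix.mat k k (\<lambda>(i,j). jm k A $$ (p i, j))"
  proof (rule eq_matI)
    fix i j assume "i < dim_row (Matrix.mat k k (\<lambda>(i,j). jm k A $$ (p i, j)))"
      "j < dim_col (Matrix.mat k k (\<lambda>(i,j). jm k A $$ (p i, j)))"
    then have ij: "i < k" "j < k" by auto
    then show "jm k (\<lambda>i j. A (p i) j) $$ (i, j) = Matrix.mat k k (\<lambda>(i,j). jm k A $$ (p i, j)) $$ (i, j)"
      using pk[OF ij(1)] by (simp add: jm_def)
  qed (simp_all add: jm_def)
  then show ?thesis unfolding dk_conv using det_permute_rows[OF jm_carrier p] by simp
qed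

lemma dk_transpose: "det_k k (\<lambda>i j. A j i) = det_k k A"
proof -
  have "jm k (\<lambda>i j. A j i) = transpose_mat (jm k A)"
    by (rule eq_matI) (simp_all add: jm_def)
  then show ?thesis unfolding dk_conv using det_transpose[OF jm_carrier] by simp
qed

lemma dk_mult: "det_k k (\<lambda>i j. \<Sum>l<k. A i l * B l j) = det_k k A * det_k k B"
proof -
  have "jm k (\<lambda>i j. \<Sum>l<k. A i l * B l j) = jm k A * jm k B"
    by (rule eq_matI) (simp_all add: jm_def scalar_prod_def atLeast0LessThan)
  then show ?thesis unfolding dk_conv using det_mult[OF jm_carrier jm_carrier] by simp
qed

lemma dk_one: "det_k k (\<lambda>i j. if i = j then 1 else 0) = 1"
proof -
  have "jm k (\<lambda>i j. if i = j then 1 else 0) = 1\<^sub>m k"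
    by (rule eq_matI) (simp_all add: jm_def)
  then show ?thesis unfolding dk_conv by simp
qed

lemma dk_kernel:
  assumes "\<And>i. i < k \<Longrightarrow> (\<Sum>j<k. A i j * v j) = 0" "j0 < k" "v j0 \<noteq> 0"
  shows "det_k k A = 0"
proof -
  let ?v = "Matrix.vec k v"
  have c: "?v \<in> carrier_vec k" by simp
  have nz: "?v \<noteq> 0\<^sub>v k"
  proof
    assume "?v = 0\<^sub>v k"
    then have "?v $ j0 = 0\<^sub>v k $ j0" by simp
    then show False using assms(2,3) by simp
  qed
  have "jm k A *\<^sub>v ?v = 0\<^sub>v k"
  proof (rule eq_vecI)
    fix i assume "i < dim_vec (0\<^sub>v k :: real vec)"
    then have i: "i < k" by simp
    have "(jm k A *\<^sub>v ?v) $ i = (\<Sum>j<k. A i j * v j)"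
      using i by (simp add: jm_def scalar_prod_def atLeast0LessThan row_def)
    then show "(jm k A *\<^sub>v ?v) $ i = 0\<^sub>v k $ i" using assms(1)[OF i] i by simp
  qed (simp add: jm_def)
  then show ?thesis unfolding dk_conv
    using det_0_iff_vec_prod_zero_field[OF jm_carrier] c nz by blast
qed

lemma dk_scale_cols: "det_k k (\<lambda>i j. A i j * c j) = (\<Prod>j<k. c j) * det_k k A"
proof -
  have *: "(\<Prod>i<k. A i (p i) * c (p i)) = (\<Prod>j<k. c j) * (\<Prod>i<k. A i (p i))"
    if p: "p permutes {..<k}" for p
  proof -
    have "(\<Prod>i<k. c (p i)) = (\<Prod>j<k. c j)"
      using prod.permute[OF p, of c] by (simp add: comp_def)
    then show ?thesis by (simp add: prod.distrib)
  qed
  show ?thesis unfolding det_k_def sum_distrib_left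
    by (rule sum.cong) (simp_all add: *)
qed

lemma sorted_facts:
  fixes B :: "'e::{finite,linorder} set"
  assumes "card B = k"
  shows "length (sorted_list_of_set B) = k" "distinct (sorted_list_of_set B)"
    "set (sorted_list_of_set B) = B" "bij_betw ((!) (sorted_list_of_set B)) {..<k} B"
  using assms by (auto intro!: bij_betw_nth)

lemma cb_inner:
  fixes X Z :: "nat \<Rightarrow> 'e::{finite,linorder} \<Rightarrow> real"
  assumes cB: "card B = k"
  shows "(\<Sum>g\<in>{g\<in>PiE {..<k} (\<lambda>_. UNIV). inj_on g {..<k} \<and> g ` {..<k} = B}.
            (\<Prod>i<k. X i (g i)) * det_k k (\<lambda>i j. Z j (g i)))
       = det_k k (col_submat X B) * det_k k (col_submat Z B)"
proof -
  define s where "s = sorted_list_of_set B"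
  note sf = sorted_facts[OF cB, folded s_def]
  have injs: "inj_on ((!) s) {..<k}" using bij_betw_imp_inj_on[OF sf(4)] .
  have ims: "(!) s ` {..<k} = B" using bij_betw_imp_surj_on[OF sf(4)] .
  define T where "T = {g\<in>PiE {..<k} (\<lambda>_. UNIV::'e set). inj_on g {..<k} \<and> g ` {..<k} = B}"
  define gt where "gt \<tau> = restrict (\<lambda>i. s ! \<tau> i) {..<k}" for \<tau> :: "nat \<Rightarrow> nat"
  define tg where "tg g = (\<lambda>i. if i < k then the_inv_into {..<k} ((!) s) (g i) else i)" for g :: "nat \<Rightarrow> 'e"
  define F where "F g = (\<Prod>i<k. X i (g i)) * det_k k (\<lambda>i j. Z j (g i))" for g
  have dZ: "det_k k (\<lambda>i j. Z j (s ! i)) = det_k k (col_submat Z B)"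
    using dk_transpose[of k "col_submat Z B"] by (simp add: col_submat_def s_def)
  have "(\<Sum>g\<in>T. F g) = (\<Sum>\<tau> | \<tau> permutes {..<k}. of_int (sign \<tau>) * (\<Prod>i<k. col_submat X B i (\<tau> i)) * det_k k (col_submat Z B))"
  proof (rule sum.reindex_bij_witness[where i=tg and j=gt, symmetric])
    fix \<tau> assume "\<tau> \<in> {\<tau>. \<tau> permutes {..<k}}"
    then have p: "\<tau> permutes {..<k}" by simp
    have pk: "i < k \<Longrightarrow> \<tau> i < k" for i using permutes_in_image[OF p, of i] by simp
    show "tg (gt \<tau>) = \<tau>"
    proof
      fix i show "tg (gt \<tau>) i = \<tau> i"
      proof (cases "i < k")
        case True
        have "tg (gt \<tau>) i = the_inv_into {..<k} ((!) s) (s ! \<tau> i)" using True by (simp add: tg_def gt_def)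
        also have "\<dots> = \<tau> i" using the_inv_into_f_f[OF injs, of "\<tau> i"] pk[OF True] by simp
        finally show ?thesis .
      next
        case False
        then show ?thesis using permutes_not_in[OF p, of i] by (simp add: tg_def)
      qed
    qed
    have im: "(\<lambda>i. s ! \<tau> i) ` {..<k} = B"
    proof -
      have "(\<lambda>i. s ! \<tau> i) ` {..<k} = (!) s ` (\<tau> ` {..<k})" by (simp add: image_image)
      then show ?thesis using permutes_image[OF p] ims by simp
    qed
    have inj: "inj_on (\<lambda>i. s ! \<tau> i) {..<k}"
    proof -
      have "inj_on ((!) s \<circ> \<tau>) {..<k}"
        using comp_inj_on[of \<tau> "{..<k}" "(!) s"] permutes_inj_on[OF p] permutes_image[OF p] injs
        by simp
      then show ?thesis by (simp add: comp_def)
    qed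
    show "gt \<tau> \<in> T" unfolding T_def gt_def
    proof -
      have "restrict (\<lambda>i. s ! \<tau> i) {..<k} ` {..<k} = (\<lambda>i. s ! \<tau> i) ` {..<k}" by simp
      moreover have "inj_on (restrict (\<lambda>i. s ! \<tau> i) {..<k}) {..<k}"
        using inj by (simp add: inj_on_def)
      ultimately show "restrict (\<lambda>i. s ! \<tau> i) {..<k} \<in> {g \<in> {..<k} \<rightarrow>\<^sub>E UNIV. inj_on g {..<k} \<and> g ` {..<k} = B}"
        using im by simp
    qed
  next
    fix g assume "g \<in> T"
    then have g: "g \<in> PiE {..<k} (\<lambda>_. UNIV)" "inj_on g {..<k}" "g ` {..<k} = B"
      unfolding T_def by auto
    show "gt (tg g) = g"
    proof
      fix i show "gt (tg g) i = g i"
      proof (cases "i < k")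
        case True
        then have gi: "g i \<in> (!) s ` {..<k}" using g(3) ims by blast
        have "gt (tg g) i = s ! (the_inv_into {..<k} ((!) s) (g i))" using True by (simp add: gt_def tg_def)
        also have "\<dots> = g i" by (rule f_the_inv_into_f[OF injs gi])
        finally show ?thesis .
      next
        case False
        then have "g i = undefined" using g(1) PiE_arb[of g "{..<k}" "\<lambda>_. UNIV" i] by simp
        then show ?thesis using False by (simp add: gt_def)
      qed
    qed
    have bg: "bij_betw g {..<k} B" using g by (simp add: bij_betw_def)
    have bi: "bij_betw (the_inv_into {..<k} ((!) s)) B {..<k}"
      using bij_betw_the_inv_into[OF sf(4)] .
    have "bij_betw (the_inv_into {..<k} ((!) s) \<circ> g) {..<k} {..<k}"
      using bij_betw_trans[OF bg bi] .
    moreover have "(the_inv_into {..<k} ((!) s) \<circ> g) a = tg g a" if "a \<in> {..<k}" for a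
      using that by (simp add: tg_def)
    ultimately have "bij_betw (tg g) {..<k} {..<k}" using bij_betw_cong[of "{..<k}"] by metis
    then show "tg g \<in> {\<tau>. \<tau> permutes {..<k}}"
    proof -
      have "tg g permutes {..<k}"
        by (rule bij_imp_permutes[OF \<open>bij_betw (tg g) {..<k} {..<k}\<close>]) (simp add: tg_def)
      then show ?thesis by simp
    qed
  next
    fix \<tau> assume "\<tau> \<in> {\<tau>. \<tau> permutes {..<k}}"
    then have p: "\<tau> permutes {..<k}" by simp
    have pk: "i < k \<Longrightarrow> \<tau> i < k" for i using permutes_in_image[OF p, of i] by simp
    have "F (gt \<tau>) = (\<Prod>i<k. X i (s ! \<tau> i)) * det_k k (\<lambda>i j. Z j (s ! \<tau> i))"
    proof -
      have a: "(\<Prod>i<k. X i (gt \<tau> i)) = (\<Prod>i<k. X i (s ! \<tau> i))"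
        by (rule prod.cong) (simp_all add: gt_def)
      have b: "det_k k (\<lambda>i j. Z j (gt \<tau> i)) = det_k k (\<lambda>i j. Z j (s ! \<tau> i))"
        unfolding det_k_def by (rule sum.cong, simp, rule arg_cong[where f="\<lambda>x. _ * x"], rule prod.cong)
          (simp_all add: gt_def)
      show ?thesis unfolding F_def a b ..
    qed
    also have "\<dots> = (\<Prod>i<k. X i (s ! \<tau> i)) * (of_int (sign \<tau>) * det_k k (col_submat Z B))"
      using dk_perm_rows[OF p, of "\<lambda>i j. Z j (s ! i)"] dZ by simp
    finally show "F (gt \<tau>) = of_int (sign \<tau>) * (\<Prod>i<k. col_submat X B i (\<tau> i)) * det_k k (col_submat Z B)"
      by (simp add: col_submat_def s_def)
  qed
  also have "\<dots> = det_k k (col_submat X B) * det_k k (col_submat Z B)"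
    unfolding det_k_def[of k "col_submat X B"] sum_distrib_right by simp
  finally show ?thesis unfolding T_def F_def .
qed


lemma swap_aux:
  fixes c :: "'p \<Rightarrow> real"
  shows "(\<Sum>p\<in>P. c p * (\<Sum>g\<in>G. a g * b p g)) = (\<Sum>g\<in>G. a g * (\<Sum>p\<in>P. c p * b p g))"
proof -
  have "(\<Sum>p\<in>P. c p * (\<Sum>g\<in>G. a g * b p g)) = (\<Sum>p\<in>P. \<Sum>g\<in>G. a g * (c p * b p g))"
    by (simp add: sum_distrib_left mult.left_commute)
  also have "\<dots> = (\<Sum>g\<in>G. \<Sum>p\<in>P. a g * (c p * b p g))" by (rule sum.swap)
  also have "\<dots> = (\<Sum>g\<in>G. a g * (\<Sum>p\<in>P. c p * b p g))" by (simp add: sum_distrib_left)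
  finally show ?thesis .
qed

lemma cauchy_binet:
  fixes X Z :: "nat \<Rightarrow> 'e::{finite,linorder} \<Rightarrow> real"
  shows "det_k k (\<lambda>i j. \<Sum>f\<in>UNIV. X i f * Z j f)
       = (\<Sum>B\<in>{B. card B = k}. det_k k (col_submat X B) * det_k k (col_submat Z B))"
proof -
  define G where "G = PiE {..<k} (\<lambda>_. UNIV::'e set)"
  define F where "F g = (\<Prod>i<k. X i (g i)) * det_k k (\<lambda>i j. Z j (g i))" for g
  have fG: "finite G" by (simp add: G_def finite_PiE)
  have 1: "det_k k (\<lambda>i j. \<Sum>f\<in>UNIV. X i f * Z j f) = (\<Sum>g\<in>G. F g)"
  proof -
    have "det_k k (\<lambda>i j. \<Sum>f\<in>UNIV. X i f * Z j f) = (\<Sum>p | p permutes {..<k}. of_int (sign p) * (\<Sum>g\<in>G. \<Prod>i<k. X i (g i) * Z (p i) (g i)))"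
      unfolding det_k_def G_def by (simp add: prod_sum_PiE)
    also have "\<dots> = (\<Sum>p | p permutes {..<k}. of_int (sign p) * (\<Sum>g\<in>G. (\<Prod>i<k. X i (g i)) * (\<Prod>i<k. Z (p i) (g i))))"
      by (simp add: prod.distrib)
    also have "\<dots> = (\<Sum>g\<in>G. (\<Prod>i<k. X i (g i)) * (\<Sum>p | p permutes {..<k}. of_int (sign p) * (\<Prod>i<k. Z (p i) (g i))))"
      by (rule swap_aux)
    also have "\<dots> = (\<Sum>g\<in>G. F g)" unfolding F_def det_k_def by simp
    finally show ?thesis .
  qed
  have z: "F g = 0" if ni: "\<not> inj_on g {..<k}" for g
  proof -
    obtain i1 i2 where ii: "i1 < k" "i2 < k" "i1 \<noteq> i2" "g i1 = g i2"
      using ni unfolding inj_on_def by auto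
    have "det_k k (\<lambda>i j. Z j (g i)) = 0" by (rule dk_rows_eq[OF ii(1-3)]) (simp add: ii(4))
    then show ?thesis by (simp add: F_def)
  qed
  define GI where "GI = {g\<in>G. inj_on g {..<k}}"
  have 2: "(\<Sum>g\<in>G. F g) = (\<Sum>g\<in>GI. F g)"
    by (rule sum.mono_neutral_right) (auto simp: fG GI_def z)
  have 3: "(\<Sum>g\<in>GI. F g) = (\<Sum>B\<in>{B::'e set. card B = k}. \<Sum>g\<in>{g. g \<in> GI \<and> g ` {..<k} = B}. F g)"
    by (rule sum.group[symmetric]) (auto simp: GI_def fG card_image)
  have 4: "(\<Sum>g\<in>{g. g \<in> GI \<and> g ` {..<k} = B}. F g) = det_k k (col_submat X B) * det_k k (col_submat Z B)"
    if "card B = k" for B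
  proof -
    have "{g. g \<in> GI \<and> g ` {..<k} = B} = {g\<in>PiE {..<k} (\<lambda>_. UNIV). inj_on g {..<k} \<and> g ` {..<k} = B}"
      by (auto simp: GI_def G_def)
    then show ?thesis using cb_inner[OF that, of X Z] by (simp add: F_def)
  qed
  show ?thesis unfolding 1 2 3 by (rule sum.cong) (simp_all add: 4)
qed

definition mmul :: "'b set \<Rightarrow> ('a \<Rightarrow> 'b \<Rightarrow> real) \<Rightarrow> ('b \<Rightarrow> 'c \<Rightarrow> real) \<Rightarrow> 'a \<Rightarrow> 'c \<Rightarrow> real" where
  "mmul S A B = (\<lambda>i j. \<Sum>l\<in>S. A i l * B l j)"

definition tr :: "('a \<Rightarrow> 'b \<Rightarrow> real) \<Rightarrow> 'b \<Rightarrow> 'a \<Rightarrow> real" where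
  "tr A = (\<lambda>i j. A j i)"

definition idm :: "nat \<Rightarrow> nat \<Rightarrow> nat \<Rightarrow> real" where
  "idm k = (\<lambda>i j. if i = j \<and> i < k then 1 else 0)"

lemma mmul_assoc:
  assumes "finite S" "finite T"
  shows "mmul T (mmul S A B) C = mmul S A (mmul T B C)"
proof (intro ext)
  fix i j
  have "(\<Sum>m\<in>T. (\<Sum>l\<in>S. A i l * B l m) * C m j) = (\<Sum>m\<in>T. \<Sum>l\<in>S. A i l * (B l m * C m j))"
    by (simp add: sum_distrib_right mult.assoc)
  also have "\<dots> = (\<Sum>l\<in>S. \<Sum>m\<in>T. A i l * (B l m * C m j))" by (rule sum.swap)
  also have "\<dots> = (\<Sum>l\<in>S. A i l * (\<Sum>m\<in>T. B l m * C m j))" by (simp add: sum_distrib_left)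
  finally show "mmul T (mmul S A B) C i j = mmul S A (mmul T B C) i j" by (simp add: mmul_def)
qed

lemma tr_tr[simp]: "tr (tr A) = A" by (simp add: tr_def)

lemma tr_mmul: "tr (mmul S A B) = mmul S (tr B) (tr A)"
  by (simp add: tr_def mmul_def mult.commute)

lemma idm_left:
  assumes "\<And>i j. i \<ge> k \<Longrightarrow> Y i j = 0"
  shows "mmul {..<k} (idm k) Y = Y"
proof (intro ext)
  fix i j
  have "(\<Sum>l<k. (if i = l \<and> i < k then 1 else 0) * Y l j) = (if i < k then Y i j else 0)"
    by (simp add: if_distrib[of "\<lambda>x. x * _"] sum.delta cong: if_cong)
  also have "\<dots> = Y i j" using assms[of i] by auto
  finally show "mmul {..<k} (idm k) Y i j = Y i j" by (simp add: mmul_def idm_def)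
qed

lemma idm_right:
  assumes "\<And>i j. j \<ge> k \<Longrightarrow> Y i j = 0"
  shows "mmul {..<k} Y (idm k) = Y"
proof (intro ext)
  fix i j
  have "(\<Sum>l<k. Y i l * (if l = j \<and> l < k then 1 else 0)) = (if j < k then Y i j else 0)"
    by (simp add: if_distrib[of "\<lambda>x. _ * x"] sum.delta' cong: if_cong)
  also have "\<dots> = Y i j" using assms[of j] by auto
  finally show "mmul {..<k} Y (idm k) i j = Y i j" by (simp add: mmul_def idm_def)
qed

lemma dk_cong:
  assumes "\<And>i j. i < k \<Longrightarrow> j < k \<Longrightarrow> A i j = B i j"
  shows "det_k k A = det_k k B"
  unfolding det_k_def
proof (rule sum.cong[OF refl])
  fix p assume "p \<in> {p. p permutes {..<k}}"
  then have "i < k \<Longrightarrow> p i < k" for i using permutes_in_image[of p "{..<k}" i] by simp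
  then show "of_int (sign p) * (\<Prod>i<k. A i (p i)) = of_int (sign p) * (\<Prod>i<k. B i (p i))"
    using assms by simp
qed

lemma dk_idm: "det_k k (idm k) = 1"
proof -
  have "det_k k (idm k) = det_k k (\<lambda>i j. if i = j then 1 else 0)"
    by (rule dk_cong) (simp add: idm_def)
  then show ?thesis using dk_one[of k] by simp
qed

lemma dk_mmul: "det_k k (mmul {..<k} A B) = det_k k A * det_k k B"
  unfolding mmul_def by (rule dk_mult)


lemma dpp:
  fixes X Z :: "nat \<Rightarrow> 'e::{finite,linorder} \<Rightarrow> real"
  assumes XZ: "\<And>i j. i < k \<Longrightarrow> j < k \<Longrightarrow> (\<Sum>f\<in>UNIV. X i f * Z j f) = (if i = j then 1 else 0)"
  shows "(\<Sum>B | card B = k \<and> e \<in> B. det_k k (col_submat X B) * det_k k (col_submat Z B))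
         = (\<Sum>i<k. X i e * Z i e)"
proof -
  define a where "a i = X i e" for i
  define b where "b i = Z i e" for i
  define \<gamma> where "\<gamma> = (\<Sum>i<k. a i * b i)"
  define d where "d B = det_k k (col_submat X B) * det_k k (col_submat Z B)" for B
  define \<alpha> where "\<alpha> = (\<Sum>B | card B = k \<and> e \<notin> B. d B)"
  define \<beta> where "\<beta> = (\<Sum>B | card B = k \<and> e \<in> B. d B)"
  define Fc where "Fc c = det_k k (\<lambda>i j. (if i = j then 1 else 0) + c * a i * b j)" for c
  have key: "Fc (s - 1) = \<alpha> + s * \<beta>" for s
  proof -
    define w where "w f = (if f = e then s else 1)" for f
    define Xs where "Xs i f = X i f * w f" for i f
    have "Fc (s - 1) = det_k k (\<lambda>i j. \<Sum>f\<in>UNIV. Xs i f * Z j f)"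
      unfolding Fc_def
    proof (rule dk_cong)
      fix i j assume ij: "i < k" "j < k"
      have "(\<Sum>f\<in>UNIV. Xs i f * Z j f) = (\<Sum>f\<in>UNIV. X i f * Z j f + (if f = e then (s - 1) * (X i e * Z j e) else 0))"
        by (rule sum.cong) (auto simp: Xs_def w_def algebra_simps)
      also have "\<dots> = (\<Sum>f\<in>UNIV. X i f * Z j f) + (s - 1) * (X i e * Z j e)"
        by (simp add: sum.distrib)
      finally show "(if i = j then 1 else 0) + (s - 1) * a i * b j = (\<Sum>f\<in>UNIV. Xs i f * Z j f)"
        using XZ[OF ij] by (simp add: a_def b_def mult.assoc)
    qed
    also have "\<dots> = (\<Sum>B\<in>{B. card B = k}. det_k k (col_submat Xs B) * det_k k (col_submat Z B))"
      by (rule cauchy_binet)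
    also have "\<dots> = (\<Sum>B\<in>{B. card B = k}. (if e \<in> B then s else 1) * d B)"
    proof (rule sum.cong[OF refl])
      fix B :: "'e set" assume "B \<in> {B. card B = k}"
      then have cB: "card B = k" by simp
      define sl where "sl = sorted_list_of_set B"
      have "col_submat Xs B = (\<lambda>i j. col_submat X B i j * w (sl ! j))"
        by (simp add: col_submat_def Xs_def sl_def)
      then have "det_k k (col_submat Xs B) = (\<Prod>j<k. w (sl ! j)) * det_k k (col_submat X B)"
        by (simp add: dk_scale_cols)
      also have "(\<Prod>j<k. w (sl ! j)) = (\<Prod>f\<in>B. w f)"
        using prod.reindex_bij_betw[OF sorted_facts(4)[OF cB], of w] by (simp add: sl_def)
      also have "(\<Prod>f\<in>B. w f) = (if e \<in> B then s else 1)"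
        unfolding w_def using prod.delta[of B e "\<lambda>_. s"] by simp
      finally show "det_k k (col_submat Xs B) * det_k k (col_submat Z B) = (if e \<in> B then s else 1) * d B"
        by (simp add: d_def)
    qed
    also have "\<dots> = \<alpha> + s * \<beta>"
    proof -
      have "(\<Sum>B\<in>{B. card B = k}. (if e \<in> B then s else 1) * d B)
          = (\<Sum>B\<in>{B. card B = k}. if e \<in> B then s * d B else d B)"
        by (rule sum.cong) auto
      also have "\<dots> = (\<Sum>B\<in>{B. card B = k} \<inter> {B. e \<in> B}. s * d B) + (\<Sum>B\<in>{B. card B = k} \<inter> - {B. e \<in> B}. d B)"
        by (rule sum.If_cases) simp
      also have "{B::'e set. card B = k} \<inter> {B. e \<in> B} = {B. card B = k \<and> e \<in> B}" by auto
      also have "{B::'e set. card B = k} \<inter> - {B. e \<in> B} = {B. card B = k \<and> e \<notin> B}" by auto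
      finally show ?thesis unfolding \<alpha>_def \<beta>_def by (simp add: sum_distrib_left)
    qed
    finally show ?thesis .
  qed
  have F0: "Fc 0 = 1" unfolding Fc_def using dk_one[of k] by simp
  have Flin: "Fc c = 1 + c * \<beta>" for c
    using key[of "c + 1"] key[of 1] F0 by (simp add: algebra_simps)
  have "\<beta> = \<gamma>"
  proof (cases "\<gamma> = 0")
    case False
    define c where "c = - 1 / \<gamma>"
    obtain j0 where j0: "j0 < k" "a j0 \<noteq> 0"
      using False unfolding \<gamma>_def by (metis (no_types, lifting) lessThan_iff mult_eq_0_iff sum.neutral)
    have "Fc c = 0" unfolding Fc_def
    proof (rule dk_kernel[of k _ a j0, OF _ j0])
      fix i assume i: "i < k"
      have e1: "(\<Sum>j<k. ((if i = j then 1 else 0) + c * a i * b j) * a j) = (\<Sum>j<k. (if i = j then 1 else 0) * a j) + (\<Sum>j<k. c * a i * b j * a j)"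
        by (simp add: distrib_right sum.distrib)
      have e2: "(\<Sum>j<k. (if i = j then 1 else 0) * a j) = a i"
        using i by (simp add: if_distrib[of "\<lambda>x. x * _"] cong: if_cong)
      have e3: "(\<Sum>j<k. c * a i * b j * a j) = c * a i * \<gamma>"
        by (simp add: \<gamma>_def sum_distrib_left mult_ac)
      have "(\<Sum>j<k. ((if i = j then 1 else 0) + c * a i * b j) * a j) = a i * (1 + c * \<gamma>)"
        unfolding e1 e2 e3 by (simp add: algebra_simps)
      also have "\<dots> = 0" using False by (simp add: c_def)
      finally show "(\<Sum>j<k. ((if i = j then 1 else 0) + c * a i * b j) * a j) = 0" .
    qed
    then have "1 + c * \<beta> = 0" using Flin[of c] by simp
    then show ?thesis using False by (simp add: c_def field_simps)
  next
    case True
    have "Fc 1 * Fc (-1) = 1"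
    proof -
      have "Fc 1 * Fc (-1) = det_k k (mmul {..<k} (\<lambda>i j. (if i = j then 1 else 0) + 1 * a i * b j)
                                               (\<lambda>i j. (if i = j then 1 else 0) + (-1) * a i * b j))"
        unfolding Fc_def by (simp add: dk_mmul)
      also have "\<dots> = det_k k (\<lambda>i j. if i = j then 1 else 0)"
      proof (rule dk_cong)
        fix i j assume ij: "i < k" "j < k"
        have "(\<Sum>l<k. ((if i = l then 1 else 0) + 1 * a i * b l) * ((if l = j then 1 else 0) + (-1) * a l * b j))
           = (\<Sum>l<k. (if i = l then (if l = j then 1 else 0) else 0)) - (\<Sum>l<k. (if i = l then a l * b j else 0))
             + a i * (\<Sum>l<k. (if l = j then b l else 0)) - a i * b j * (\<Sum>l<k. a l * b l)"
          by (simp add: algebra_simps sum.distrib sum_subtractf sum_distrib_left if_distrib[of "\<lambda>x. x * _"] if_distrib[of "\<lambda>x. _ * x"] cong: if_cong)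
        also have "\<dots> = (if i = j then 1 else 0)" using ij True by (simp add: \<gamma>_def)
        finally show "mmul {..<k} (\<lambda>i j. (if i = j then 1 else 0) + 1 * a i * b j)
                                  (\<lambda>i j. (if i = j then 1 else 0) + (-1) * a i * b j) i j = (if i = j then 1 else 0)"
          by (simp add: mmul_def)
      qed
      also have "\<dots> = 1" by (rule dk_one)
      finally show ?thesis .
    qed
    then have "(1 + \<beta>) * (1 - \<beta>) = 1" using Flin[of 1] Flin[of "-1"] by simp
    then have "\<beta> * \<beta> = 0" by (simp add: algebra_simps)
    then show ?thesis using True by simp
  qed
  then show ?thesis unfolding \<beta>_def \<gamma>_def d_def a_def b_def .
qed

definition minv :: "nat \<Rightarrow> (nat \<Rightarrow> nat \<Rightarrow> real) \<Rightarrow> nat \<Rightarrow> nat \<Rightarrow> real" where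
  "minv k M = (\<lambda>i j. if i < k \<and> j < k then adj_mat (jm k M) $$ (i,j) / det_k k M else 0)"

lemma minv_trunc: "i \<ge> k \<or> j \<ge> k \<Longrightarrow> minv k M i j = 0"
  by (auto simp: minv_def)

lemma minv_right:
  assumes d: "det_k k M \<noteq> 0" and tM: "\<And>i j. i \<ge> k \<Longrightarrow> M i j = 0"
  shows "mmul {..<k} M (minv k M) = idm k"
proof (intro ext)
  fix i j
  show "mmul {..<k} M (minv k M) i j = idm k i j"
  proof (cases "i < k \<and> j < k")
    case True
    have A: "jm k M * adj_mat (jm k M) = Determinant.det (jm k M) \<cdot>\<^sub>m 1\<^sub>m k"
      using adj_mat(2)[OF jm_carrier] .
    have C: "adj_mat (jm k M) \<in> carrier_mat k k" using adj_mat(1)[OF jm_carrier] .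
    have "(jm k M * adj_mat (jm k M)) $$ (i,j) = (\<Sum>l<k. M i l * adj_mat (jm k M) $$ (l,j))"
      using True C by (simp add: jm_def scalar_prod_def atLeast0LessThan row_def col_def)
    moreover have "(Determinant.det (jm k M) \<cdot>\<^sub>m 1\<^sub>m k) $$ (i,j) = det_k k M * (if i = j then 1 else 0)"
      using True by (simp add: dk_conv)
    ultimately have E: "(\<Sum>l<k. M i l * adj_mat (jm k M) $$ (l,j)) = det_k k M * (if i = j then 1 else 0)"
      using A by simp
    have "mmul {..<k} M (minv k M) i j = (\<Sum>l<k. M i l * adj_mat (jm k M) $$ (l,j)) / det_k k M"
      using True by (simp add: mmul_def minv_def sum_divide_distrib)
    also have "\<dots> = idm k i j" using E d True by (simp add: idm_def)
    finally show ?thesis .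
  next
    case False
    then show ?thesis by (auto simp: mmul_def minv_def idm_def tM)
  qed
qed

lemma minv_left:
  assumes d: "det_k k M \<noteq> 0" and tM: "\<And>i j. j \<ge> k \<Longrightarrow> M i j = 0"
  shows "mmul {..<k} (minv k M) M = idm k"
proof (intro ext)
  fix i j
  show "mmul {..<k} (minv k M) M i j = idm k i j"
  proof (cases "i < k \<and> j < k")
    case True
    have A: "adj_mat (jm k M) * jm k M = Determinant.det (jm k M) \<cdot>\<^sub>m 1\<^sub>m k"
      using adj_mat(3)[OF jm_carrier] .
    have C: "adj_mat (jm k M) \<in> carrier_mat k k" using adj_mat(1)[OF jm_carrier] .
    have "(adj_mat (jm k M) * jm k M) $$ (i,j) = (\<Sum>l<k. adj_mat (jm k M) $$ (i,l) * M l j)"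
      using True C by (simp add: jm_def scalar_prod_def atLeast0LessThan row_def col_def)
    moreover have "(Determinant.det (jm k M) \<cdot>\<^sub>m 1\<^sub>m k) $$ (i,j) = det_k k M * (if i = j then 1 else 0)"
      using True by (simp add: dk_conv)
    ultimately have E: "(\<Sum>l<k. adj_mat (jm k M) $$ (i,l) * M l j) = det_k k M * (if i = j then 1 else 0)"
      using A by simp
    have "mmul {..<k} (minv k M) M i j = (\<Sum>l<k. adj_mat (jm k M) $$ (i,l) * M l j) / det_k k M"
      using True by (simp add: mmul_def minv_def sum_divide_distrib)
    also have "\<dots> = idm k i j" using E d True by (simp add: idm_def)
    finally show ?thesis .
  next
    case False
    then show ?thesis by (auto simp: mmul_def minv_def idm_def tM)
  qed
qed


definition gram :: "(nat \<Rightarrow> 'e::finite \<Rightarrow> real) \<Rightarrow> nat \<Rightarrow> nat \<Rightarrow> real" where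
  "gram X = mmul UNIV X (tr X)"

definition projm :: "nat \<Rightarrow> (nat \<Rightarrow> 'e::finite \<Rightarrow> real) \<Rightarrow> 'e \<Rightarrow> 'e \<Rightarrow> real" where
  "projm k X = mmul {..<k} (mmul {..<k} (tr X) (minv k (gram X))) X"

lemma tr_idm[simp]: "tr (idm k) = idm k" by (intro ext) (auto simp: tr_def idm_def)

lemma gram_sym: "tr (gram X) = gram X"
  by (simp add: gram_def tr_mmul)

lemma gram_trunc:
  assumes tX: "\<And>i f. i \<ge> k \<Longrightarrow> X i f = 0"
  shows "i \<ge> k \<or> j \<ge> k \<Longrightarrow> gram X i j = 0"
  by (auto simp: gram_def mmul_def tr_def tX)

lemma minv_sym:
  assumes d: "det_k k M \<noteq> 0" and tM: "\<And>i j. i \<ge> k \<or> j \<ge> k \<Longrightarrow> M i j = 0" and sM: "tr M = M"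
  shows "tr (minv k M) = minv k M"
proof -
  let ?N = "minv k M"
  have R: "mmul {..<k} M ?N = idm k" by (rule minv_right[OF d]) (simp add: tM)
  have L: "mmul {..<k} ?N M = idm k" by (rule minv_left[OF d]) (simp add: tM)
  have "tr ?N = mmul {..<k} (tr ?N) (idm k)"
    by (rule idm_right[symmetric]) (simp add: tr_def minv_trunc)
  also have "\<dots> = mmul {..<k} (tr ?N) (mmul {..<k} M ?N)" by (simp add: R)
  also have "\<dots> = mmul {..<k} (mmul {..<k} (tr ?N) M) ?N" by (simp add: mmul_assoc)
  also have "mmul {..<k} (tr ?N) M = idm k"
  proof -
    have "mmul {..<k} (tr ?N) M = mmul {..<k} (tr ?N) (tr M)" by (simp add: sM)
    also have "\<dots> = tr (mmul {..<k} M ?N)" by (simp add: tr_mmul)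
    finally show ?thesis by (simp add: R)
  qed
  also have "mmul {..<k} (idm k) ?N = ?N"
    by (rule idm_left) (simp add: minv_trunc)
  finally show ?thesis .
qed

lemma proj_facts:
  fixes X :: "nat \<Rightarrow> 'e::{finite,linorder} \<Rightarrow> real"
  assumes tX: "\<And>i f. i \<ge> k \<Longrightarrow> X i f = 0" and d: "det_k k (gram X) \<noteq> 0"
  shows "tr (projm k X) = projm k X"
    and "mmul UNIV (projm k X) (projm k X) = projm k X"
    and "card B = k \<Longrightarrow> det_k k (principal_submat (projm k X) B)
           = det_k k (col_submat X B) ^ 2 * det_k k (minv k (gram X))"
    and "det_k k (minv k (gram X)) * det_k k (gram X) = 1"
    and "det_k k (gram X) = (\<Sum>B | card B = k. det_k k (col_submat X B) ^ 2)"
    and "projm k X e e = (\<Sum>B | card B = k \<and> e \<in> B. det_k k (col_submat X B) ^ 2) * det_k k (minv k (gram X))"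
proof -
  define M where "M = gram X"
  define N where "N = minv k M"
  define K where "K = {..<k}"
  have tM: "\<And>i j. i \<ge> k \<or> j \<ge> k \<Longrightarrow> M i j = 0" unfolding M_def by (rule gram_trunc[OF tX])
  have dM: "det_k k M \<noteq> 0" using d by (simp add: M_def)
  have R: "mmul K M N = idm k" unfolding K_def N_def by (rule minv_right[OF dM]) (simp add: tM)
  have L: "mmul K N M = idm k" unfolding K_def N_def by (rule minv_left[OF dM]) (simp add: tM)
  have sM: "tr M = M" unfolding M_def by (rule gram_sym)
  have sN: "tr N = N" unfolding N_def by (rule minv_sym[OF dM]) (auto simp: tM sM)
  have P: "projm k X = mmul K (mmul K (tr X) N) X" by (simp add: projm_def K_def N_def M_def)
  have fK: "finite K" by (simp add: K_def)
  show "tr (projm k X) = projm k X"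
    unfolding P by (simp add: tr_mmul sN mmul_assoc fK)
  have XXt: "mmul UNIV X (mmul K (tr X) Y) = mmul K M Y" for Y :: "nat \<Rightarrow> 'c \<Rightarrow> real"
    by (simp add: M_def gram_def mmul_assoc fK)
  have NX: "mmul K (idm k) X = X" unfolding K_def by (rule idm_left) (simp add: tX)
  show "mmul UNIV (projm k X) (projm k X) = projm k X"
  proof -
    have "mmul UNIV (projm k X) (projm k X) = mmul K (mmul K (tr X) N) (mmul UNIV X (mmul K (mmul K (tr X) N) X))"
      unfolding P by (simp add: mmul_assoc fK)
    also have "mmul UNIV X (mmul K (mmul K (tr X) N) X) = mmul K (mmul UNIV X (mmul K (tr X) N)) X"
      by (simp add: mmul_assoc fK)
    also have "mmul UNIV X (mmul K (tr X) N) = idm k" by (simp add: XXt R)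
    finally show ?thesis using NX P by simp
  qed
  show "det_k k N * det_k k (gram X) = 1"
    using dk_mmul[of k N M] L dk_idm[of k] by (simp add: K_def M_def)
  show DG: "det_k k (gram X) = (\<Sum>B | card B = k. det_k k (col_submat X B) ^ 2)"
    using cauchy_binet[of k X X] by (simp add: gram_def mmul_def tr_def power2_eq_square)
  show "card B = k \<Longrightarrow> det_k k (principal_submat (projm k X) B) = det_k k (col_submat X B) ^ 2 * det_k k N"
  proof -
    assume cB: "card B = k"
    let ?XB = "col_submat X B"
    have "principal_submat (projm k X) B = mmul K (mmul K (tr ?XB) N) ?XB"
      by (simp add: P principal_submat_def col_submat_def mmul_def tr_def)
    then have "det_k k (principal_submat (projm k X) B) = det_k k (tr ?XB) * det_k k N * det_k k ?XB"
      by (simp add: K_def dk_mmul)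
    moreover have "det_k k (tr ?XB) = det_k k ?XB" unfolding tr_def by (rule dk_transpose)
    ultimately show ?thesis by (simp add: power2_eq_square mult_ac)
  qed
  show "projm k X e e = (\<Sum>B | card B = k \<and> e \<in> B. det_k k (col_submat X B) ^ 2) * det_k k N"
  proof -
    define Z where "Z = mmul K N X"
    have XZ: "mmul UNIV X (tr Z) = idm k"
      unfolding Z_def tr_mmul sN by (simp add: XXt R)
    have XZ': "(\<Sum>f\<in>UNIV. X i f * Z j f) = (if i = j then 1 else 0)" if "i < k" "j < k" for i j
      using fun_cong[OF fun_cong[OF XZ, of i], of j] that by (simp add: mmul_def tr_def idm_def)
    have dZ: "det_k k (col_submat Z B) = det_k k N * det_k k (col_submat X B)" for B
    proof -
      have "col_submat Z B = mmul K N (col_submat X B)"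
        by (simp add: Z_def col_submat_def mmul_def)
      then show ?thesis by (simp add: K_def dk_mmul)
    qed
    have "projm k X e e = (\<Sum>i<k. X i e * Z i e)"
      by (simp add: P mmul_assoc fK Z_def[symmetric]) (simp add: mmul_def tr_def K_def)
    also have "\<dots> = (\<Sum>B | card B = k \<and> e \<in> B. det_k k (col_submat X B) * det_k k (col_submat Z B))"
      by (rule dpp[symmetric]) (rule XZ')
    also have "\<dots> = (\<Sum>B | card B = k \<and> e \<in> B. det_k k (col_submat X B) ^ 2) * det_k k N"
      by (simp add: dZ sum_distrib_left power2_eq_square mult_ac)
    finally show ?thesis .
  qed
qed

lemma exists_min:
  fixes v :: "'b \<Rightarrow> real^'n" and w \<mu> :: "'b \<Rightarrow> real"
  assumes fI: "finite I" and neI: "I \<noteq> {}" and wpos: "\<And>i. i \<in> I \<Longrightarrow> w i > 0"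
    and mpos: "\<And>i. i \<in> I \<Longrightarrow> \<mu> i > 0"
    and bal: "(\<Sum>i\<in>I. \<mu> i *\<^sub>R v i) = 0"
  shows "\<exists>t. \<forall>s. (\<Sum>i\<in>I. w i * exp (inner (v i) t)) \<le> (\<Sum>i\<in>I. w i * exp (inner (v i) s))"
proof -
  define h where "h s = (\<Sum>i\<in>I. w i * exp (inner (v i) s))" for s
  define U where "U = span (v ` I)"
  have contg: "continuous_on S h" for S unfolding h_def by (intro continuous_intros)
  have vU: "i \<in> I \<Longrightarrow> v i \<in> U" for i unfolding U_def by (simp add: span_base)
  have zero_on_U: "y = 0" if yU: "y \<in> U" and ort: "\<And>i. i \<in> I \<Longrightarrow> inner (v i) y \<le> 0" for y
  proof -
    have "(\<Sum>i\<in>I. \<mu> i * inner (v i) y) = inner (\<Sum>i\<in>I. \<mu> i *\<^sub>R v i) y"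
      by (simp add: inner_sum_left)
    then have s0: "(\<Sum>i\<in>I. \<mu> i * inner (v i) y) = 0" using bal by simp
    have nn: "\<And>i. i \<in> I \<Longrightarrow> 0 \<le> - (\<mu> i * inner (v i) y)"
      using ort mpos by (simp add: mult_nonneg_nonpos less_imp_le)
    have "(\<Sum>i\<in>I. - (\<mu> i * inner (v i) y)) = 0" using s0 by (simp add: sum_negf)
    then have "\<forall>i\<in>I. - (\<mu> i * inner (v i) y) = 0" using sum_nonneg_eq_0_iff[of I "\<lambda>i. - (\<mu> i * inner (v i) y)"] fI nn by blast
    then have "\<And>i. i \<in> I \<Longrightarrow> inner (v i) y = 0" using mpos by (metis less_irrefl mult_eq_0_iff neg_equal_0_iff_equal)
    then have "\<And>x. x \<in> v ` I \<Longrightarrow> real_inner_class.orthogonal y x" by (auto simp: real_inner_class.orthogonal_def inner_commute)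
    then have "real_inner_class.orthogonal y y" using orthogonal_to_span yU unfolding U_def by blast
    then show ?thesis by (simp add: real_inner_class.orthogonal_def)
  qed
  obtain \<delta> where \<delta>: "\<delta> > 0" "\<And>y. y \<in> U \<Longrightarrow> \<exists>i\<in>I. inner (v i) y \<ge> \<delta> * norm y"
  proof -
    define g where "g y = (\<Sum>i\<in>I. max 0 (inner (v i) y))" for y
    define K where "K = U \<inter> sphere 0 1"
    have cK: "compact K" unfolding K_def U_def
      by (rule closed_Int_compact[OF closed_subspace[OF subspace_span] compact_sphere])
    have gpos: "g y > 0" if "y \<in> K" for y
    proof (rule ccontr)
      assume "\<not> g y > 0"
      then have "g y = 0" unfolding g_def by (metis (no_types, lifting) linorder_not_less max.cobounded1 order_antisym sum_nonneg)
      then have "\<forall>i\<in>I. max 0 (inner (v i) y) = 0" unfolding g_def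
        using sum_nonneg_eq_0_iff[OF fI] by (metis max.cobounded1)
      then have "\<And>i. i \<in> I \<Longrightarrow> inner (v i) y \<le> 0" by (metis max.cobounded2)
      then have "y = 0" using zero_on_U that unfolding K_def by blast
      then show False using that unfolding K_def by simp
    qed
    obtain \<delta>0 where d0: "\<delta>0 > 0" "\<And>y. y \<in> K \<Longrightarrow> g y \<ge> \<delta>0"
    proof (cases "K = {}")
      case True then show ?thesis using that[of 1] by simp
    next
      case False
      have "continuous_on K g" unfolding g_def by (intro continuous_intros)
      then obtain y0 where "y0 \<in> K" "\<And>y. y \<in> K \<Longrightarrow> g y0 \<le> g y"
        using continuous_attains_inf[OF cK False] by blast
      then show ?thesis using that[of "g y0"] gpos by blast
    qed
    define \<delta> where "\<delta> = \<delta>0 / real (card I)"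
    have cI: "real (card I) > 0" using fI neI by (simp add: card_gt_0_iff)
    have dpos: "\<delta> > 0" unfolding \<delta>_def using d0(1) cI by simp
    have main: "\<exists>i\<in>I. inner (v i) y \<ge> \<delta> * norm y" if yU: "y \<in> U" for y
    proof (cases "y = 0")
      case True then show ?thesis using neI by auto
    next
      case False
      define y' where "y' = y /\<^sub>R norm y"
      have "y' \<in> U" unfolding y'_def U_def using yU U_def by (simp add: span_mul)
      moreover have "norm y' = 1" using False by (simp add: y'_def)
      ultimately have "y' \<in> K" by (simp add: K_def)
      then have gy: "g y' \<ge> \<delta>0" by (rule d0(2))
      have "\<exists>i\<in>I. max 0 (inner (v i) y') \<ge> \<delta>"
      proof (rule ccontr)
        assume "\<not> ?thesis"
        then have "\<And>i. i \<in> I \<Longrightarrow> max 0 (inner (v i) y') < \<delta>" by auto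
        then have "g y' < (\<Sum>i\<in>I. \<delta>)" unfolding g_def by (intro sum_strict_mono[OF fI neI]) auto
        also have "\<dots> = \<delta>0" using cI by (simp add: \<delta>_def)
        finally show False using gy by simp
      qed
      then obtain i where i: "i \<in> I" "max 0 (inner (v i) y') \<ge> \<delta>" by blast
      then have "inner (v i) y' \<ge> \<delta>" using dpos by (metis max_def order.strict_iff_not)
      then have "norm y * inner (v i) y' \<ge> norm y * \<delta>" by (simp add: mult_left_mono)
      moreover have "norm y * inner (v i) y' = inner (v i) y" using False by (simp add: y'_def)
      ultimately show ?thesis using i(1) by (metis mult.commute)
    qed
    show ?thesis using that[OF dpos main] by blast
  qed
  define wmin where "wmin = Min (w ` I)"
  have wmin_pos: "wmin > 0" unfolding wmin_def using fI neI wpos by simp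
  have wmin_le: "i \<in> I \<Longrightarrow> wmin \<le> w i" for i unfolding wmin_def using fI by simp
  have hpos: "h s > 0" for s unfolding h_def using fI neI wpos by (intro sum_pos) auto
  have lowU: "h y \<ge> wmin * exp (\<delta> * norm y)" if yU: "y \<in> U" for y
  proof -
    obtain i where i: "i \<in> I" "inner (v i) y \<ge> \<delta> * norm y" using \<delta>(2)[OF yU] by blast
    have "wmin * exp (\<delta> * norm y) \<le> w i * exp (inner (v i) y)"
      using i wmin_le[OF i(1)] wmin_pos by (intro mult_mono) auto
    also have "\<dots> \<le> h y" unfolding h_def
      using i(1) fI wpos by (intro member_le_sum) (auto intro: less_imp_le)
    finally show ?thesis .
  qed
  define R where "R = h 0 / (wmin * \<delta>)"
  have R0: "R \<ge> 0" unfolding R_def using hpos[of 0] wmin_pos \<delta>(1) by simp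
  obtain t0 where t0: "t0 \<in> cball 0 R" "\<And>y. y \<in> cball 0 R \<Longrightarrow> h t0 \<le> h y"
    using continuous_attains_inf[OF compact_cball, of 0 R h] R0 contg by fastforce
  have "h t0 \<le> h s" for s
  proof -
    obtain y z where yz: "y \<in> span (v ` I)" "\<And>x. x \<in> span (v ` I) \<Longrightarrow> real_inner_class.orthogonal z x" "s = y + z"
      using orthogonal_subspace_decomp_exists by blast
    have "inner (v i) z = 0" if "i \<in> I" for i
      using yz(2)[OF vU[OF that, unfolded U_def]] by (simp add: real_inner_class.orthogonal_def inner_commute)
    then have hs: "h s = h y" unfolding h_def yz(3) by (intro sum.cong) (auto simp: inner_add_right)
    show ?thesis
    proof (cases "norm y \<le> R")
      case True
      then show ?thesis using t0(2)[of y] hs by simp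
    next
      case False
      have "h t0 \<le> h 0" using t0(2)[of 0] R0 by simp
      also have "h 0 = wmin * (\<delta> * R)" unfolding R_def using wmin_pos \<delta>(1) by simp
      also have "\<dots> < wmin * (\<delta> * norm y)" using False wmin_pos \<delta>(1) by simp
      also have "\<dots> < wmin * exp (\<delta> * norm y)"
        using wmin_pos by (simp add: exp_gt_self)
      also have "\<dots> \<le> h y" using lowU yz(1) unfolding U_def by blast
      finally show ?thesis using hs by simp
    qed
  qed
  then show ?thesis unfolding h_def by blast
qed

lemma min_grad:
  fixes v :: "'b \<Rightarrow> real^'n" and w :: "'b \<Rightarrow> real"
  assumes fI: "finite I"
    and min: "\<And>s. (\<Sum>i\<in>I. w i * exp (inner (v i) t)) \<le> (\<Sum>i\<in>I. w i * exp (inner (v i) s))"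
  shows "(\<Sum>i\<in>I. w i * exp (inner (v i) t) * vec_nth (v i) e) = 0"
proof -
  define \<phi> where "\<phi> r = (\<Sum>i\<in>I. w i * exp (inner (v i) t + r * vec_nth (v i) e))" for r
  have phi: "\<phi> r = (\<Sum>i\<in>I. w i * exp (inner (v i) (t + r *\<^sub>R axis e 1)))" for r
    unfolding \<phi>_def by (simp add: inner_add_right inner_axis mult.commute)
  have "(\<phi> has_real_derivative (\<Sum>i\<in>I. w i * (exp (inner (v i) t + 0 * vec_nth (v i) e) * vec_nth (v i) e))) (at 0)"
    unfolding \<phi>_def by (auto intro!: derivative_eq_intros sum.cong simp: mult_ac)
  then have D: "(\<phi> has_real_derivative (\<Sum>i\<in>I. w i * exp (inner (v i) t) * vec_nth (v i) e)) (at 0)"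
    by (simp add: mult.assoc)
  show ?thesis
  proof (rule DERIV_local_min[OF D, of 1])
    show "\<forall>y. \<bar>0 - y\<bar> < 1 \<longrightarrow> \<phi> 0 \<le> \<phi> y"
      using min by (simp add: phi)
  qed simp
qed

lemma ri_hull_finite:
  fixes S :: "'a::euclidean_space set"
  assumes "finite S"
  shows "rel_interior (convex hull S) = {y. \<exists>u. (\<forall>x\<in>S. 0 < u x) \<and> sum u S = 1 \<and> (\<Sum>x\<in>S. u x *\<^sub>R x) = y}"
  using rel_interior_convex_hull_union [where S="\<lambda>x. {x}" and I=S, OF assms] by force

lemma indicator_vec_nth: "vec_nth (indicator_vec B) e = (if e \<in> B then 1 else 0)"
  by (simp add: indicator_vec_def)

lemma indicator_vec_inj: "inj indicator_vec"
proof (rule injI)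
  fix B C :: "'e::finite set" assume "indicator_vec B = indicator_vec C"
  then have "vec_nth (indicator_vec B) e = vec_nth (indicator_vec C) e" for e by simp
  then have h: "(if e \<in> B then (1::real) else 0) = (if e \<in> C then 1 else 0)" for e
    by (simp add: indicator_vec_nth)
  have "e \<in> B \<longleftrightarrow> e \<in> C" for e using h[of e] by (cases "e \<in> B"; cases "e \<in> C") auto
  then show "B = C" by blast
qed

lemma ri_iff:
  fixes bases :: "('e::finite) set set" and y :: "real^'e"
  shows "y \<in> rel_interior (base_polytope bases) \<longleftrightarrow>
    (\<exists>\<mu>. (\<forall>B\<in>bases. \<mu> B > 0) \<and> sum \<mu> bases = 1 \<and> (\<Sum>B\<in>bases. \<mu> B *\<^sub>R indicator_vec B) = y)"
proof -
  have fb: "finite bases" by simp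
  have inj: "inj_on indicator_vec bases" using inj_on_subset[OF indicator_vec_inj subset_UNIV] .
  have S: "finite (indicator_vec ` bases)" by simp
  show ?thesis
  proof
    assume "y \<in> rel_interior (base_polytope bases)"
    then obtain u where u: "\<forall>x\<in>indicator_vec ` bases. 0 < u x" "sum u (indicator_vec ` bases) = 1"
      "(\<Sum>x\<in>indicator_vec ` bases. u x *\<^sub>R x) = y"
      unfolding base_polytope_def ri_hull_finite[OF S] by blast
    show "\<exists>\<mu>. (\<forall>B\<in>bases. \<mu> B > 0) \<and> sum \<mu> bases = 1 \<and> (\<Sum>B\<in>bases. \<mu> B *\<^sub>R indicator_vec B) = y"
      using u sum.reindex[OF inj, of u] sum.reindex[OF inj, of "\<lambda>x. u x *\<^sub>R x"]
      by (intro exI[of _ "\<lambda>B. u (indicator_vec B)"]) (simp add: comp_def)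
  next
    assume "\<exists>\<mu>. (\<forall>B\<in>bases. \<mu> B > 0) \<and> sum \<mu> bases = 1 \<and> (\<Sum>B\<in>bases. \<mu> B *\<^sub>R indicator_vec B) = y"
    then obtain \<mu> where m: "\<forall>B\<in>bases. \<mu> B > 0" "sum \<mu> bases = 1" "(\<Sum>B\<in>bases. \<mu> B *\<^sub>R indicator_vec B) = y"
      by blast
    define u where "u x = \<mu> (the_inv_into bases indicator_vec x)" for x
    have uB: "B \<in> bases \<Longrightarrow> u (indicator_vec B) = \<mu> B" for B
      unfolding u_def using the_inv_into_f_f[OF inj] by simp
    have "(\<forall>x\<in>indicator_vec ` bases. 0 < u x) \<and> sum u (indicator_vec ` bases) = 1
          \<and> (\<Sum>x\<in>indicator_vec ` bases. u x *\<^sub>R x) = y"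
      using m uB sum.reindex[OF inj, of u] sum.reindex[OF inj, of "\<lambda>x. u x *\<^sub>R x"]
      by (simp add: comp_def)
    then show "y \<in> rel_interior (base_polytope bases)"
      unfolding base_polytope_def ri_hull_finite[OF S] by blast
  qed
qed

lemma col_scale_det:
  fixes X :: "nat \<Rightarrow> 'e::{finite,linorder} \<Rightarrow> real"
  assumes cB: "card B = k"
  shows "det_k k (col_submat (\<lambda>i f. X i f * d f) B) = (\<Prod>f\<in>B. d f) * det_k k (col_submat X B)"
proof -
  define sl where "sl = sorted_list_of_set B"
  have "col_submat (\<lambda>i f. X i f * d f) B = (\<lambda>i j. col_submat X B i j * d (sl ! j))"
    by (simp add: col_submat_def sl_def)
  then have "det_k k (col_submat (\<lambda>i f. X i f * d f) B) = (\<Prod>j<k. d (sl ! j)) * det_k k (col_submat X B)"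
    by (simp add: dk_scale_cols)
  also have "(\<Prod>j<k. d (sl ! j)) = (\<Prod>f\<in>B. d f)"
    using prod.reindex_bij_betw[OF sorted_facts(4)[OF cB], of d] by (simp add: sl_def)
  finally show ?thesis .
qed

lemma dir_forward:
  fixes bases :: "('e::{finite,linorder}) set set" and X :: "nat \<Rightarrow> 'e \<Rightarrow> real"
  assumes bX: "\<And>B. B \<in> bases \<longleftrightarrow> card B = k \<and> det_k k (col_submat X B) \<noteq> 0"
    and tX: "\<And>i f. i \<ge> k \<Longrightarrow> X i f = 0"
    and ne: "bases \<noteq> {}"
    and rk: "matroid_rank bases = k"
    and sud: "(\<chi> e. c) \<in> rel_interior (base_polytope bases)"
  shows "\<exists>T. projection_representation bases T \<and> (\<forall>e. T e e = c)"
proof -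
  obtain \<mu> where m: "\<forall>B\<in>bases. \<mu> B > 0" "sum \<mu> bases = 1" "(\<Sum>B\<in>bases. \<mu> B *\<^sub>R indicator_vec B) = (\<chi> e. c)"
    using sud ri_iff by blast
  define cv where "cv = vec_lambda (\<lambda>e::'e. c)"
  define v where "v B = indicator_vec B - cv" for B
  define w where "w B = det_k k (col_submat X B) ^ 2" for B
  have fb: "finite bases" by simp
  have wpos: "B \<in> bases \<Longrightarrow> w B > 0" for B using bX[of B] by (simp add: w_def)
  have bal: "(\<Sum>B\<in>bases. \<mu> B *\<^sub>R v B) = 0"
  proof -
    have "(\<Sum>B\<in>bases. \<mu> B *\<^sub>R v B) = (\<Sum>B\<in>bases. \<mu> B *\<^sub>R indicator_vec B) - (\<Sum>B\<in>bases. \<mu> B) *\<^sub>R cv"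
      by (simp add: v_def scaleR_diff_right sum_subtractf scaleR_sum_left)
    then show ?thesis using m(2,3) by (simp add: cv_def)
  qed
  have "\<exists>t. \<forall>s. (\<Sum>B\<in>bases. w B * exp (inner (v B) t)) \<le> (\<Sum>B\<in>bases. w B * exp (inner (v B) s))"
    by (rule exists_min[where I=bases and w=w and \<mu>=\<mu> and v=v]) (use fb ne wpos m(1) bal in auto)
  then obtain t where t: "\<And>s. (\<Sum>B\<in>bases. w B * exp (inner (v B) t)) \<le> (\<Sum>B\<in>bases. w B * exp (inner (v B) s))"
    by blast
  have grad: "(\<Sum>B\<in>bases. w B * exp (inner (v B) t) * vec_nth (v B) e) = 0" for e
    by (rule min_grad[OF fb t])
  define d where "d f = exp (vec_nth t f / 2)" for f
  define X' where "X' i f = X i f * d f" for i f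
  define E where "E = exp (c * (\<Sum>f\<in>UNIV. vec_nth t f))"
  define p where "p B = det_k k (col_submat X' B) ^ 2" for B
  have tX': "\<And>i f. i \<ge> k \<Longrightarrow> X' i f = 0" by (simp add: X'_def tX)
  have dX': "det_k k (col_submat X' B) = (\<Prod>f\<in>B. d f) * det_k k (col_submat X B)" if "card B = k" for B
    unfolding X'_def by (rule col_scale_det[OF that])
  have dpos: "(\<Prod>f\<in>B. d f) > 0" for B by (simp add: d_def prod_pos)
  have prodd: "(\<Prod>f\<in>B. d f) ^ 2 = exp (\<Sum>f\<in>B. vec_nth t f)" for B
  proof -
    have "(\<Prod>f\<in>B. d f) ^ 2 = (\<Prod>f\<in>B. d f ^ 2)" by (simp add: prod_power_distrib)
    also have "\<dots> = (\<Prod>f\<in>B. exp (vec_nth t f))"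
      by (rule prod.cong) (simp_all add: d_def power2_eq_square exp_add[symmetric])
    also have "\<dots> = exp (\<Sum>f\<in>B. vec_nth t f)" by (simp add: exp_sum)
    finally show ?thesis .
  qed
  have vnth: "vec_nth (v B) f = (if f \<in> B then 1 else 0) - c" for B f
    by (simp add: v_def cv_def indicator_vec_nth)
  have inner_v: "inner (v B) t = (\<Sum>f\<in>B. vec_nth t f) - c * (\<Sum>f\<in>UNIV. vec_nth t f)" for B
  proof -
    have "inner (v B) t = (\<Sum>f\<in>UNIV. ((if f \<in> B then 1 else 0) - c) * vec_nth t f)"
      by (simp add: inner_vec_def vnth)
    also have "\<dots> = (\<Sum>f\<in>UNIV. (if f \<in> B then vec_nth t f else 0)) - c * (\<Sum>f\<in>UNIV. vec_nth t f)"
      by (simp add: left_diff_distrib sum_subtractf sum_distrib_left if_distrib[of "\<lambda>x. x * _"] cong: if_cong)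
    also have "(\<Sum>f\<in>UNIV. (if f \<in> B then vec_nth t f else 0)) = (\<Sum>f\<in>B. vec_nth t f)"
      using sum.inter_restrict[of UNIV "\<lambda>f. vec_nth t f" B] by simp
    finally show ?thesis .
  qed
  have pB: "p B = E * (w B * exp (inner (v B) t))" if "card B = k" for B
  proof -
    have "p B = (\<Prod>f\<in>B. d f) ^ 2 * w B" by (simp add: p_def w_def dX'[OF that] power_mult_distrib)
    also have "\<dots> = exp (\<Sum>f\<in>B. vec_nth t f) * w B" by (simp add: prodd)
    also have "exp (\<Sum>f\<in>B. vec_nth t f) = E * exp (inner (v B) t)"
      by (simp add: E_def inner_v exp_add[symmetric])
    finally show ?thesis by simp
  qed
  have cardb: "B \<in> bases \<Longrightarrow> card B = k" for B using bX by blast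
  have marg: "(\<Sum>B\<in>{B\<in>bases. e \<in> B}. p B) = c * (\<Sum>B\<in>bases. p B)" for e
  proof -
    have "(\<Sum>B\<in>bases. p B * vec_nth (v B) e) = E * (\<Sum>B\<in>bases. w B * exp (inner (v B) t) * vec_nth (v B) e)"
      by (simp add: sum_distrib_left pB cardb mult_ac)
    then have z: "(\<Sum>B\<in>bases. p B * ((if e \<in> B then 1 else 0) - c)) = 0" using grad[of e] by (simp add: vnth)
    have "(\<Sum>B\<in>bases. p B * ((if e \<in> B then 1 else 0) - c)) = (\<Sum>B\<in>bases. if e \<in> B then p B else 0) - c * (\<Sum>B\<in>bases. p B)"
      by (simp add: right_diff_distrib sum_subtractf sum_distrib_left mult_ac if_distrib[of "\<lambda>x. _ * x"] cong: if_cong)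
    moreover have "(\<Sum>B\<in>bases. if e \<in> B then p B else 0) = (\<Sum>B\<in>{B\<in>bases. e \<in> B}. p B)"
      by (simp add: sum.inter_filter)
    ultimately show ?thesis using z by simp
  qed
  have pnb: "p B = 0" if "card B = k" "B \<notin> bases" for B
    using bX[of B] that by (simp add: p_def dX')
  have ppos: "p B > 0" if "B \<in> bases" for B
    using bX[of B] that dpos[of B] by (simp add: p_def dX' d_def)
  have sum_all: "(\<Sum>B | card B = k. p B) = (\<Sum>B\<in>bases. p B)"
    by (rule sum.mono_neutral_right) (auto simp: cardb pnb)
  have sum_e: "(\<Sum>B | card B = k \<and> e \<in> B. p B) = (\<Sum>B\<in>{B\<in>bases. e \<in> B}. p B)" for e
    by (rule sum.mono_neutral_right) (auto simp: cardb, metis pnb)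
  have Spos: "(\<Sum>B\<in>bases. p B) > 0" using ppos fb ne by (intro sum_pos) auto
  have dG: "det_k k (gram X') = (\<Sum>B | card B = k. p B)"
    using cauchy_binet[of k X' X'] by (simp add: gram_def mmul_def tr_def power2_eq_square p_def)
  have dGnz: "det_k k (gram X') \<noteq> 0" using dG sum_all Spos by simp
  have PF1: "tr (projm k X') = projm k X'" using proj_facts(1)[of k X'] tX' dGnz by blast
  have PF2: "mmul UNIV (projm k X') (projm k X') = projm k X'" using proj_facts(2)[of k X'] tX' dGnz by blast
  have PF3: "det_k k (principal_submat (projm k X') B) = det_k k (col_submat X' B) ^ 2 * det_k k (minv k (gram X'))"
    if "card B = k" for B using proj_facts(3)[of k X' B] tX' dGnz that by blast
  have PF4: "det_k k (minv k (gram X')) * det_k k (gram X') = 1" using proj_facts(4)[of k X'] tX' dGnz by blast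
  have PF6: "projm k X' e e = (\<Sum>B | card B = k \<and> e \<in> B. det_k k (col_submat X' B) ^ 2) * det_k k (minv k (gram X'))" for e
    using proj_facts(6)[of k X' e] tX' dGnz by blast
  define T where "T = projm k X'"
  define N where "N = minv k (gram X')"
  have dN: "det_k k N = 1 / (\<Sum>B\<in>bases. p B)"
    using PF4 dG sum_all Spos by (simp add: N_def field_simps)
  have "projection_representation bases T"
    unfolding projection_representation_def rk
  proof (intro conjI allI impI)
    fix e f show "T e f = T f e" using fun_cong[OF fun_cong[OF PF1, of f], of e] by (simp add: T_def tr_def)
  next
    fix e f show "(\<Sum>g\<in>UNIV. T e g * T g f) = T e f"
      using fun_cong[OF fun_cong[OF PF2, of e], of f] by (simp add: T_def mmul_def)
  next
    fix B :: "'e set" assume cB: "card B = k"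
    have "det_k k (principal_submat T B) = p B * det_k k N"
      using PF3[OF cB] by (simp add: T_def N_def p_def)
    then show "det_k k (principal_submat T B) \<noteq> 0 \<longleftrightarrow> B \<in> bases"
      using dN Spos ppos[of B] pnb[OF cB] by (cases "B \<in> bases") auto
  qed
  moreover have "T e e = c" for e
  proof -
    have "T e e = (\<Sum>B | card B = k \<and> e \<in> B. p B) * det_k k N"
      using PF6[of e] by (simp add: T_def N_def p_def)
    also have "\<dots> = c" using sum_e[of e] marg[of e] dN Spos by simp
    finally show ?thesis .
  qed
  ultimately show ?thesis by blast
qed

lemma trace_comm:
  assumes "finite S" "finite T"
  shows "(\<Sum>e\<in>S. mmul T A B e e) = (\<Sum>i\<in>T. mmul S B A i i)"
  unfolding mmul_def by (subst sum.swap) (simp add: mult.commute)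

lemma dir_backward:
  fixes bases :: "('e::{finite,linorder}) set set" and T :: "'e \<Rightarrow> 'e \<Rightarrow> real"
  assumes ne: "bases \<noteq> {}" and cardb: "\<And>B. B \<in> bases \<Longrightarrow> card B = k"
    and rk: "matroid_rank bases = k"
    and PR: "projection_representation bases T" and diag: "\<And>e. T e e = c"
    and cdef: "c = real k / real CARD('e)"
  shows "(\<chi> e. c) \<in> rel_interior (base_polytope bases)"
proof -
  have symT: "T e f = T f e" for e f using PR by (simp add: projection_representation_def)
  have idT: "(\<Sum>g\<in>UNIV. T e g * T g f) = T e f" for e f using PR unfolding projection_representation_def by blast
  have minT: "card B = k \<Longrightarrow> (det_k k (principal_submat T B) \<noteq> 0 \<longleftrightarrow> B \<in> bases)" for B
    using PR rk by (simp add: projection_representation_def)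
  obtain B0 where B0: "B0 \<in> bases" using ne by blast
  have cB0: "card B0 = k" using cardb[OF B0] .
  define s0 where "s0 = sorted_list_of_set B0"
  define Y where "Y i f = (if i < k then T (s0 ! i) f else 0)" for i f
  have tY: "\<And>i f. i \<ge> k \<Longrightarrow> Y i f = 0" by (simp add: Y_def)
  have gY: "gram Y i j = principal_submat T B0 i j" if "i < k" "j < k" for i j
  proof -
    have "gram Y i j = (\<Sum>f\<in>UNIV. T (s0 ! i) f * T f (s0 ! j))"
      using that by (simp add: gram_def mmul_def tr_def Y_def symT[of _ "s0 ! j"])
    also have "\<dots> = T (s0 ! i) (s0 ! j)" by (rule idT)
    finally show ?thesis by (simp add: principal_submat_def s0_def)
  qed
  have dGnz: "det_k k (gram Y) \<noteq> 0"
  proof -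
    have "det_k k (gram Y) = det_k k (principal_submat T B0)" by (rule dk_cong) (simp add: gY)
    then show ?thesis using minT[OF cB0] B0 by simp
  qed
  define K where "K = {..<k}"
  define N where "N = minv k (gram Y)"
  define M where "M = gram Y"
  define P where "P = projm k Y"
  have fK: "finite K" by (simp add: K_def)
  have PF1: "tr P = P" using proj_facts(1)[of k Y] tY dGnz by (simp add: P_def)
  have PF2: "mmul UNIV P P = P" using proj_facts(2)[of k Y] tY dGnz by (simp add: P_def)
  have PF3: "det_k k (principal_submat P B) = det_k k (col_submat Y B) ^ 2 * det_k k N"
    if "card B = k" for B using proj_facts(3)[of k Y B] tY dGnz that by (simp add: P_def N_def)
  have PF4: "det_k k N * det_k k M = 1" using proj_facts(4)[of k Y] tY dGnz by (simp add: N_def M_def)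
  have PF5: "det_k k M = (\<Sum>B | card B = k. det_k k (col_submat Y B) ^ 2)"
    using cauchy_binet[of k Y Y] by (simp add: M_def gram_def mmul_def tr_def power2_eq_square)
  have PF6: "P e e = (\<Sum>B | card B = k \<and> e \<in> B. det_k k (col_submat Y B) ^ 2) * det_k k N" for e
    using proj_facts(6)[of k Y e] tY dGnz by (simp add: P_def N_def)
  have tM: "\<And>i j. i \<ge> k \<or> j \<ge> k \<Longrightarrow> M i j = 0" unfolding M_def by (rule gram_trunc[OF tY])
  have NM: "mmul K N M = idm k" unfolding K_def N_def M_def
    by (rule minv_left[OF dGnz]) (simp add: tM[unfolded M_def])
  have Pdef: "P = mmul K (mmul K (tr Y) N) Y" by (simp add: P_def projm_def K_def N_def)
  have trT: "tr T = T" by (intro ext) (simp add: tr_def symT)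
  have TT: "mmul UNIV T T = T" by (intro ext) (simp add: mmul_def idT)
  have TY: "mmul UNIV T (tr Y) = tr Y"
  proof (intro ext)
    fix e i
    show "mmul UNIV T (tr Y) e i = tr Y e i"
    proof (cases "i < k")
      case True
      have "mmul UNIV T (tr Y) e i = (\<Sum>g\<in>UNIV. T e g * T g (s0 ! i))"
        using True by (simp add: mmul_def tr_def Y_def symT[of _ "s0 ! i"])
      also have "\<dots> = T e (s0 ! i)" by (rule idT)
      finally show ?thesis using True by (simp add: tr_def Y_def symT)
    qed (simp add: mmul_def tr_def Y_def)
  qed
  have TP: "mmul UNIV T P = P"
  proof -
    have "mmul UNIV T P = mmul K (mmul UNIV T (mmul K (tr Y) N)) Y"
      unfolding Pdef by (simp add: mmul_assoc fK)
    also have "mmul UNIV T (mmul K (tr Y) N) = mmul K (mmul UNIV T (tr Y)) N"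
      by (simp add: mmul_assoc fK)
    finally show ?thesis by (simp add: TY Pdef)
  qed
  have PT: "mmul UNIV P T = P"
  proof -
    have "mmul UNIV P T = tr (mmul UNIV (tr T) (tr P))" by (simp add: tr_mmul)
    also have "\<dots> = P" by (simp add: trT PF1 TP)
    finally show ?thesis .
  qed
  define Q where "Q e f = T e f - P e f" for e f
  have QQ: "(\<Sum>g\<in>UNIV. Q e g * Q g f) = Q e f" for e f
  proof -
    have "(\<Sum>g\<in>UNIV. Q e g * Q g f) = mmul UNIV T T e f - mmul UNIV T P e f - mmul UNIV P T e f + mmul UNIV P P e f"
      by (simp add: Q_def mmul_def algebra_simps sum_subtractf sum.distrib)
    then show ?thesis by (simp add: TT TP PT PF2 Q_def)
  qed
  have Qsym: "Q e f = Q f e" for e f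
    using symT[of e f] fun_cong[OF fun_cong[OF PF1, of f], of e] by (simp add: Q_def tr_def)
  have trP: "(\<Sum>e\<in>UNIV. P e e) = real k"
  proof -
    have "(\<Sum>e\<in>UNIV. P e e) = (\<Sum>e\<in>UNIV. mmul K (tr Y) (mmul K N Y) e e)"
      by (simp add: Pdef mmul_assoc fK)
    also have "\<dots> = (\<Sum>i\<in>K. mmul UNIV (mmul K N Y) (tr Y) i i)"
      by (rule trace_comm) (simp_all add: fK)
    also have "\<dots> = (\<Sum>i\<in>K. mmul K N M i i)"
      by (simp add: mmul_assoc fK M_def gram_def)
    also have "\<dots> = real k" using NM unfolding K_def by (simp add: idm_def)
    finally show ?thesis .
  qed
  have trT': "(\<Sum>e\<in>UNIV. T e e) = real k"
    using cdef by (simp add: diag)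
  have trQ: "(\<Sum>e\<in>UNIV. Q e e) = 0" using trP trT' by (simp add: Q_def sum_subtractf)
  have "(\<Sum>e\<in>UNIV. \<Sum>f\<in>UNIV. Q e f ^ 2) = 0"
  proof -
    have "(\<Sum>e\<in>UNIV. \<Sum>f\<in>UNIV. Q e f ^ 2) = (\<Sum>e\<in>UNIV. \<Sum>f\<in>UNIV. Q e f * Q f e)"
      by (simp add: power2_eq_square Qsym[of _ e for e])
    also have "\<dots> = (\<Sum>e\<in>UNIV. Q e e)" by (simp add: QQ)
    finally show ?thesis using trQ by simp
  qed
  then have "\<forall>e\<in>UNIV. (\<Sum>f\<in>UNIV. Q e f ^ 2) = 0"
    by (subst sum_nonneg_eq_0_iff[symmetric]) (simp_all add: sum_nonneg)
  then have Q0: "Q e f = 0" for e f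
    using sum_nonneg_eq_0_iff[of UNIV "\<lambda>f. Q e f ^ 2"] by simp
  then have TPeq: "T = P" by (intro ext) (simp add: Q_def)
  have dMpos: "det_k k M > 0"
  proof -
    have "det_k k M \<ge> 0" unfolding PF5 by (intro sum_nonneg) simp
    moreover have "det_k k M \<noteq> 0" using dGnz by (simp add: M_def)
    ultimately show ?thesis by simp
  qed
  have dNpos: "det_k k N > 0"
  proof -
    have "det_k k N = 1 / det_k k M" using PF4 dMpos by (simp add: eq_divide_eq)
    then show ?thesis using dMpos by simp
  qed
  define \<mu> where "\<mu> B = det_k k (principal_submat T B)" for B
  have \<mu>eq: "card B = k \<Longrightarrow> \<mu> B = det_k k (col_submat Y B) ^ 2 * det_k k N" for B
    by (simp add: \<mu>_def TPeq PF3)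
  have \<mu>pos: "B \<in> bases \<Longrightarrow> \<mu> B > 0" for B
  proof -
    assume B: "B \<in> bases"
    then have "\<mu> B \<ge> 0" using \<mu>eq[OF cardb[OF B]] dNpos by simp
    moreover have "\<mu> B \<noteq> 0" using minT[OF cardb[OF B]] B by (simp add: \<mu>_def)
    ultimately show ?thesis by simp
  qed
  have \<mu>0: "card B = k \<Longrightarrow> B \<notin> bases \<Longrightarrow> \<mu> B = 0" for B using minT[of B] by (simp add: \<mu>_def)
  have s1: "sum \<mu> bases = 1"
  proof -
    have "sum \<mu> bases = (\<Sum>B | card B = k. \<mu> B)"
      by (rule sum.mono_neutral_left) (auto simp: cardb, metis \<mu>0)
    also have "\<dots> = (\<Sum>B | card B = k. det_k k (col_submat Y B) ^ 2) * det_k k N"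
      by (simp add: \<mu>eq sum_distrib_right)
    also have "\<dots> = 1" using PF4 PF5 by (simp add: mult.commute)
    finally show ?thesis .
  qed
  have se: "(\<Sum>B\<in>{B\<in>bases. e \<in> B}. \<mu> B) = c" for e
  proof -
    have "(\<Sum>B\<in>{B\<in>bases. e \<in> B}. \<mu> B) = (\<Sum>B | card B = k \<and> e \<in> B. \<mu> B)"
      by (rule sum.mono_neutral_left) (auto simp: cardb, metis \<mu>0)
    also have "\<dots> = (\<Sum>B | card B = k \<and> e \<in> B. det_k k (col_submat Y B) ^ 2) * det_k k N"
      by (simp add: \<mu>eq sum_distrib_right)
    also have "\<dots> = P e e" by (simp add: PF6)
    also have "\<dots> = c" using diag[of e] by (simp add: TPeq)
    finally show ?thesis .
  qed
  have "(\<Sum>B\<in>bases. \<mu> B *\<^sub>R indicator_vec B) = (\<chi> e. c)"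
  proof (rule Finite_Cartesian_Product.vec_eq_iff[THEN iffD2], intro allI)
    fix e
    have "vec_nth (\<Sum>B\<in>bases. \<mu> B *\<^sub>R indicator_vec B) e = (\<Sum>B\<in>bases. if e \<in> B then \<mu> B else 0)"
      by (simp add: indicator_vec_nth if_distrib[of "\<lambda>x. _ * x"] cong: if_cong)
    also have "\<dots> = (\<Sum>B\<in>{B\<in>bases. e \<in> B}. \<mu> B)" by (simp add: sum.inter_filter)
    finally show "vec_nth (\<Sum>B\<in>bases. \<mu> B *\<^sub>R indicator_vec B) e = vec_nth (\<chi> e. c) e"
      using se[of e] by simp
  qed
  then show ?thesis unfolding ri_iff using \<mu>pos s1 by blast
qed

theorem theorem4p10:
  fixes bases :: "('e::{finite,linorder}) set set"
  assumes "real_representable bases"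
    and "loopless bases"
  shows "strictly_uniformly_dense bases \<longleftrightarrow>
    (\<exists>T. projection_representation bases T \<and> (\<forall>e. T e e = inverse (density bases)))"
proof -
  obtain k X0 where bX0: "\<forall>B. B \<in> bases \<longleftrightarrow> card B = k \<and> det_k k (col_submat X0 B) \<noteq> 0"
    using assms(1) unfolding real_representable_def by blast
  define X where "X i f = (if i < k then X0 i f else 0)" for i f
  have tX: "\<And>i f. i \<ge> k \<Longrightarrow> X i f = 0" by (simp add: X_def)
  have colX: "det_k k (col_submat X B) = det_k k (col_submat X0 B)" for B
    by (rule dk_cong) (simp add: col_submat_def X_def)
  have bX: "\<And>B. B \<in> bases \<longleftrightarrow> card B = k \<and> det_k k (col_submat X B) \<noteq> 0"
    using bX0 colX by simp
  have ne: "bases \<noteq> {}" using assms(2) unfolding loopless_def by blast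
  have cardb: "\<And>B. B \<in> bases \<Longrightarrow> card B = k" using bX by blast
  have rk: "matroid_rank bases = k"
  proof -
    have "card ` bases = {k}" using ne cardb by blast
    then show ?thesis by (simp add: matroid_rank_def)
  qed
  have dens: "inverse (density bases) = real k / real CARD('e)"
    by (simp add: density_def rk)
  show ?thesis
    unfolding strictly_uniformly_dense_def dens
  proof
    assume sud: "(\<chi> e. real k / real CARD('e)) \<in> rel_interior (base_polytope bases)"
    show "\<exists>T. projection_representation bases T \<and> (\<forall>e. T e e = real k / real CARD('e))"
      by (rule dir_forward[where X=X and k=k]) (fact bX, fact tX, fact ne, fact rk, fact sud)
  next
    assume "\<exists>T. projection_representation bases T \<and> (\<forall>e. T e e = real k / real CARD('e))"
    then obtain T where PR: "projection_representation bases T" and diag: "\<And>e. T e e = real k / real CARD('e)"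
      by blast
    show "(\<chi> e. real k / real CARD('e)) \<in> rel_interior (base_polytope bases)"
      by (rule dir_backward[OF ne cardb rk PR diag refl])
  qed
qed

end
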